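(* Let $n>2k-t$, $k>t+1$, $q\geq 3$ and $k<2t+2$. Then \[\left[{n-t-2\atop k-t-2}\right]_q\left(1+\theta_{t+2}q^{k-t-1}\frac{q^{n-k}-1}{q^{k-t-1}-1}\right)>\theta_{k+1}-\theta_{k-t}+\left[{n-t\atop k-t}\right]_q-q^{(k-t+1)(k-t)}\left[{n-k-1\atop k-t}\right]_q,\] i.e. in $\mathrm{PG}(n,q)$ the set of all $k$-spaces meeting a fixed $(t+2)$-space in at least a $(t+1)$-space is larger than the set consisting of all $k$-spaces in $\langle\pi,\delta\rangle$ together with all $k$-spaces through $\delta$ meeting $\langle\pi,\delta\rangle$ in at least a $(t+1)$-space (for a $t$-space $\delta$ and $k$-space $\pi$ with $\dim(\pi\cap\delta)=t-1$).
   Context: $\left[{n\atop k}\right]_q=\frac{(q^n-1)\cdots(q^{n-k+1}-1)}{(q^k-1)\cdots(q-1)}$ for $k>0$, $=1$ for $k=0$; $\theta_m=\frac{q^{m+1}-1}{q-1}$; $q$ is a prime power; dimensions are projective. *)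

theory Defs
  imports Complex_Main "HOL-Computational_Algebra.Primes"
begin

text \<open>Gaussian binomial coefficient [n choose k]_q, as the product
  prod_{i<k} (q^(n-i) - 1) / (q^(i+1) - 1); equals 1 for k = 0
  (and 0 for k > n, since the factor i = n is q^0 - 1 = 0).\<close>
definition gauss_binom :: "real \<Rightarrow> nat \<Rightarrow> nat \<Rightarrow> real" where
  "gauss_binom q n k = (\<Prod>i<k. (q ^ (n - i) - 1) / (q ^ (i + 1) - 1))"

text \<open>theta_m = (q^(m+1) - 1)/(q - 1), number of points of PG(m,q).\<close>
definition theta :: "real \<Rightarrow> nat \<Rightarrow> real" where
  "theta q m = (q ^ (m + 1) - 1) / (q - 1)"

end

theory Submission
  imports Defs
begin

lemma pw1: assumes "1 < (Q::real)" shows "1 < Q * Q^a" "1 < Q^(Suc a)" "Q * Q^a \<noteq> 1"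
proof -
  have "1 \<le> Q^a" using assms by (simp add: one_le_power)
  then have "Q * 1 \<le> Q * Q^a" using assms by (intro mult_left_mono) auto
  then have "1 < Q * Q^a" using assms by linarith
  then show "1 < Q * Q^a" "1 < Q^(Suc a)" "Q * Q^a \<noteq> 1" by auto
qed

lemma G_ge0: "Q > 1 \<Longrightarrow> gauss_binom Q N K \<ge> 0"
  unfolding gauss_binom_def
  by (intro prod_nonneg ballI divide_nonneg_pos) (auto simp: one_le_power pw1)

lemma G_Suc: "gauss_binom Q N (Suc K) = gauss_binom Q N K * ((Q^(N-K)-1)/(Q^(K+1)-1))"
  unfolding gauss_binom_def by (simp add: prod.lessThan_Suc)

lemma G_split: "gauss_binom Q N K = (\<Prod>i<K. Q^(N-i)-1) / (\<Prod>i<K. Q^(i+1)-1)"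
  unfolding gauss_binom_def by (simp add: prod_dividef)

lemma G_shift:
  assumes "Q > 1"
  shows "gauss_binom Q (Suc N) (Suc K) = gauss_binom Q N K * (Q^(Suc N)-1)/(Q^(Suc K)-1)"
proof -
  have d: "(\<Prod>i<K. Q^(i+1)-1) \<noteq> 0" using assms
    by (subst prod_zero_iff) (auto simp: pw1)
  have d2: "Q^(Suc K) - 1 \<noteq> 0" using pw1[OF assms] by simp
  have "(\<Prod>i<Suc K. Q^(Suc N-i)-1) = (Q^(Suc N)-1) * (\<Prod>i<K. Q^(N-i)-1)"
    by (subst prod.lessThan_Suc_shift) simp
  moreover have "(\<Prod>i<Suc K. Q^(i+1)-1) = (\<Prod>i<K. Q^(i+1)-1) * (Q^(Suc K)-1)"
    by (simp add: prod.lessThan_Suc)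
  ultimately show ?thesis using d d2 by (simp add: G_split[of Q] field_simps)
qed

lemma G_pascal:
  assumes "Q > 1"
  shows "gauss_binom Q (Suc N) (Suc K) = gauss_binom Q N K + Q^(Suc K) * gauss_binom Q N (Suc K)"
proof (cases "K \<le> N")
  case True
  have d2: "Q^(Suc K) - 1 \<noteq> 0" using pw1[OF assms] by simp
  have e: "Q^(Suc K) * (Q^(N-K)-1) = Q^(Suc N) - Q^(Suc K)"
    using True by (simp add: algebra_simps flip: power_add)
  show ?thesis unfolding G_shift[OF assms] G_Suc[of Q N K]
    using d2 e by (simp add: field_simps) (metis)
next
  case False
  have z: "gauss_binom Q N K = 0" unfolding gauss_binom_def
    using False by (intro prod_zero bexI[of _ N]) auto
  show ?thesis unfolding G_shift[OF assms] G_Suc[of Q N K] z using False by simp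
qed

lemma G_ge1: "Q > 1 \<Longrightarrow> K \<le> N \<Longrightarrow> gauss_binom Q N K \<ge> 1"
proof (induction K arbitrary: N)
  case 0 then show ?case by (simp add: gauss_binom_def)
next
  case (Suc K)
  then obtain N' where N: "N = Suc N'" by (cases N) auto
  have "gauss_binom Q N' K \<ge> 1" using Suc N by auto
  moreover have "Q^(Suc K) * gauss_binom Q N' (Suc K) \<ge> 0"
    using Suc.prems G_ge0 by simp
  ultimately show ?case unfolding N G_pascal[OF Suc.prems(1)] by linarith
qed

lemma G_step: "Q > 1 \<Longrightarrow> gauss_binom Q (Suc M) K \<ge> Q^K * gauss_binom Q M K"
proof (cases K)
  case 0 then show ?thesis by (simp add: gauss_binom_def)
next
  case (Suc K')
  assume Q: "Q > 1"
  show ?thesis unfolding Suc G_pascal[OF Q] using G_ge0[OF Q, of M K'] by simp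
qed

lemma G_mono: "Q > 1 \<Longrightarrow> gauss_binom Q (M + j) K \<ge> Q^(j*K) * gauss_binom Q M K"
proof (induction j)
  case 0 then show ?case by simp
next
  case (Suc j)
  have "Q^(Suc j * K) * gauss_binom Q M K = Q^K * (Q^(j*K) * gauss_binom Q M K)"
    by (simp add: power_add mult.assoc)
  also have "\<dots> \<le> Q^K * gauss_binom Q (M + j) K"
    using Suc by (intro mult_left_mono) auto
  also have "\<dots> \<le> gauss_binom Q (M + Suc j) K" using G_step[OF Suc.prems, where M="M+j" and K=K] by simp
  finally show ?case .
qed

lemma G_diff:
  assumes "Q > 1"
  shows "gauss_binom Q (M + w) (Suc s) - Q^(w * Suc s) * gauss_binom Q M (Suc s)
         \<le> (\<Sum>j<w. Q^j) * gauss_binom Q (M + w - 1) s"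
  using assms
proof (induction w arbitrary: M)
  case 0 then show ?case by simp
next
  case (Suc w)
  have IH: "gauss_binom Q (Suc M + w) (Suc s) - Q^(w * Suc s) * gauss_binom Q (Suc M) (Suc s)
         \<le> (\<Sum>j<w. Q^j) * gauss_binom Q (M + w) s"
    using Suc.IH[of "Suc M"] Suc.prems by simp
  have P: "gauss_binom Q (Suc M) (Suc s) - Q^(Suc s) * gauss_binom Q M (Suc s) = gauss_binom Q M s"
    using G_pascal[OF Suc.prems] by simp
  have mo: "Q^(w * s) * gauss_binom Q M s \<le> gauss_binom Q (M + w) s"
    using G_mono[OF Suc.prems] by simp
  have "Q^(w * Suc s) * gauss_binom Q M s = Q^w * (Q^(w * s) * gauss_binom Q M s)"
    by (simp add: power_add mult.assoc)
  also have "\<dots> \<le> Q^w * gauss_binom Q (M + w) s"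
    using mo Suc.prems by (intro mult_left_mono) auto
  finally have A: "Q^(w * Suc s) * gauss_binom Q M s \<le> Q^w * gauss_binom Q (M + w) s" .
  have split: "gauss_binom Q (M + Suc w) (Suc s) - Q^(Suc w * Suc s) * gauss_binom Q M (Suc s)
     = (gauss_binom Q (Suc M + w) (Suc s) - Q^(w * Suc s) * gauss_binom Q (Suc M) (Suc s))
       + Q^(w * Suc s) * (gauss_binom Q (Suc M) (Suc s) - Q^(Suc s) * gauss_binom Q M (Suc s))"
    by (simp add: algebra_simps power_add)
  show ?case unfolding split P using IH A by (simp add: algebra_simps)
qed

lemma theta_sum: "(Q::real) > 1 \<Longrightarrow> (\<Sum>j<Suc m. Q^j) = theta Q m"
  unfolding theta_def by (simp add: sum_gp_strict field_simps)

lemma theta_mono: "(Q::real) > 1 \<Longrightarrow> a \<le> b \<Longrightarrow> theta Q a \<le> theta Q b"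
  unfolding theta_def by (intro divide_right_mono) (auto intro: power_increasing)

lemma theta_nonneg: "(Q::real) > 1 \<Longrightarrow> theta Q m \<ge> 0"
  unfolding theta_def using one_le_power[of Q "m+1"] by (intro divide_nonneg_pos) auto

lemma pow_ge9: assumes "(Q::real) \<ge> 3" "n \<ge> 2" shows "Q^n \<ge> 9"
proof -
  have "Q^2 \<le> Q^n" using assms by (intro power_increasing) auto
  moreover have "Q^2 \<ge> 9" using assms mult_mono[of 3 Q 3 Q] by (simp add: power2_eq_square)
  ultimately show ?thesis by simp
qed

lemma core:
  fixes Q :: real and a c t :: nat
  assumes Q3: "Q \<ge> 3" and ta: "a + 1 \<le> t"
  shows "gauss_binom Q (c + 2*a + 3) a *
           (1 + theta Q (t + 2) * Q ^ (a + 1) *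
                ((Q ^ (c + a + 3) - 1) / (Q ^ (a + 1) - 1)))
         > theta Q (t + a + 3) - theta Q (a + 2)
           + gauss_binom Q (c + 2*a + 5) (a + 2)
           - Q ^ ((a + 3) * (a + 2)) * gauss_binom Q (c + a + 2) (a + 2)"
proof -
  have Q1: "Q > 1" using Q3 by simp
  define G where "G = gauss_binom Q (c + 2*a + 3) a"
  define P where "P = Q ^ (a + 1)"
  define X where "X = Q ^ (c + a + 3)"
  define T1 where "T1 = theta Q (t + 1)"
  define T2 where "T2 = theta Q (t + 2)"
  define Ts where "Ts = theta Q (a + 2)"
  define Tk where "Tk = theta Q (t + a + 3)"
  define D where "D = gauss_binom Q (c + 2*a + 5) (a + 2)
           - Q ^ ((a + 3) * (a + 2)) * gauss_binom Q (c + a + 2) (a + 2)"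
  have G1: "G \<ge> 1" unfolding G_def using Q1 by (intro G_ge1) auto
  have P3: "P \<ge> 3" unfolding P_def using Q3
    by (metis le_add2 order_trans power_increasing power_one_right one_le_numeral le_add_same_cancel2 one_le_power)
  have XP: "X * P = Q ^ (c + 2*a + 4)"
  proof -
    have "c + 2*a + 4 = (c + a + 3) + (a + 1)" by simp
    then show ?thesis unfolding X_def P_def by (metis power_add)
  qed
  have Xge: "X \<ge> Q ^ (a + 3)" unfolding X_def using Q1 by (intro power_increasing) auto
  have Qa3: "Q ^ (a + 3) \<ge> 1" using Q1 by (intro one_le_power) simp
  have T2e: "T2 = Q * T1 + 1" unfolding T2_def T1_def theta_def using Q1
    by (simp add: field_simps)
  have T1pos: "T1 \<ge> 0" unfolding T1_def using Q1 by (rule theta_nonneg)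
  have Tspos: "Ts \<ge> 0" unfolding Ts_def using Q1 by (rule theta_nonneg)
  have TsT1: "Ts \<le> T1" unfolding Ts_def T1_def using Q1 ta by (intro theta_mono) auto
  have TkT1: "Tk \<le> T1 * (Q ^ (a + 3) - 1)"
  proof -
    define A where "A = Q ^ (t + 2)"
    define B where "B = Q ^ (a + 3)"
    have A9: "A \<ge> 9" unfolding A_def using Q3 by (intro pow_ge9) auto
    have B9: "B \<ge> 9" unfolding B_def using Q3 by (intro pow_ge9) auto
    have AB: "A * B = Q * Q ^ (t + a + 4)" unfolding A_def B_def by (simp flip: power_add power_Suc)
    have e1: "Tk * (Q - 1) = Q ^ (t + a + 4) - 1" unfolding Tk_def theta_def using Q1 by simp
    have e2: "T1 * (Q ^ (a + 3) - 1) * (Q - 1) = (A - 1) * (B - 1)"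
      unfolding T1_def theta_def A_def B_def using Q1 by simp
    have "Q ^ (t + a + 4) - 1 \<le> (A - 1) * (B - 1)"
    proof -
      have "Q * Q ^ (t + a + 4) \<ge> 3 * Q ^ (t + a + 4)" using Q3 by (intro mult_right_mono) auto
      moreover have "A * B \<ge> 3 * A + 3 * B"
      using A9 B9 mult_left_mono[of 6 B A] mult_right_mono[of 6 A B] by linarith
      ultimately show ?thesis using AB A9 B9 by (simp add: algebra_simps)
    qed
    then have "Tk * (Q - 1) \<le> T1 * (Q ^ (a + 3) - 1) * (Q - 1)" using e1 e2 by simp
    then show ?thesis using Q1 by simp
  qed
  have Dle: "D \<le> Ts * G * (X * P - 1) / (P - 1)"
  proof -
    have "D \<le> (\<Sum>j<a+3. Q^j) * gauss_binom Q (c + a + 2 + (a + 3) - 1) (a + 1)"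
      unfolding D_def using G_diff[OF Q1, of "c + a + 2" "a + 3" "a + 1"]
      by (simp add: numeral_eq_Suc algebra_simps)
    also have "(\<Sum>j<a+3. Q^j) = Ts" unfolding Ts_def using theta_sum[OF Q1, of "a+2"]
      by (metis add_Suc_right numeral_2_eq_2 numeral_3_eq_3)
    also have "gauss_binom Q (c + a + 2 + (a + 3) - 1) (a + 1) = G * (X * P - 1) / (P - 1)"
    proof -
      have e: "c + a + 2 + (a + 3) - 1 = Suc (c + 2*a + 3)" by simp
      have e2: "Suc (c + 2*a + 3) = c + 2*a + 4" by simp
      have e3: "Suc a = a + 1" by simp
      have "gauss_binom Q (c+2*a+4) (a+1) = G*(Q^(c+2*a+4)-1)/(Q^(a+1)-1)"
        using G_shift[OF Q1, of "c+2*a+3" a] unfolding e2 e3 G_def .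
      then show ?thesis unfolding e e2 e3 XP[symmetric] P_def[symmetric] .
    qed
    finally show ?thesis by simp
  qed
  have key: "G * (P - 1) + G * T2 * P * (X - 1) > (Tk - Ts) * (P - 1) + Ts * G * (X * P - 1)"
  proof -
    have i: "T2 \<ge> 3 * T1" using T2e Q3 T1pos mult_right_mono[of 3 Q T1] by linarith
    have ii: "2 * (P * (X - 1)) \<ge> X * P - 1"
    proof -
      have "X \<ge> 9" unfolding X_def using Q3 by (intro pow_ge9) auto
      have "P * 2 \<le> P * X" using P3 \<open>X \<ge> 9\<close> by (intro mult_left_mono) auto
      moreover have "2*(P*(X-1)) - (X*P - 1) = P*X - P*2 + 1" by (simp add: algebra_simps)
      ultimately show ?thesis by linarith
    qed
    have PX0: "P * (X - 1) \<ge> 0" using P3 Xge Qa3 by simp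
    have iv: "T1 * (P * (X - 1)) \<ge> Tk * P"
    proof -
      have "Tk * P \<le> T1 * (Q ^ (a + 3) - 1) * P" using TkT1 P3 by (intro mult_right_mono) auto
      also have "\<dots> \<le> T1 * (X - 1) * P" using Xge T1pos P3 by (intro mult_right_mono mult_left_mono) auto
      finally show ?thesis by (simp add: algebra_simps)
    qed
    define W where "W = P * (X - 1)"
    have W0: "W \<ge> 0" using PX0 unfolding W_def .
    have GW0: "G * W \<ge> 0" using G1 W0 by simp
    have a1: "T2 * (G * W) \<ge> (3 * T1) * (G * W)"
      using mult_right_mono[OF i GW0] .
    have XP1: "1 \<le> P * X" using mult_mono[of 1 P 1 X] P3 Xge Qa3 by auto
    have a2: "(T1 * G) * (2 * W) \<ge> Ts * G * (X * P - 1)"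
    proof -
      have "Ts * G * (X * P - 1) \<le> T1 * G * (X * P - 1)"
        using TsT1 G1 XP1 by (intro mult_right_mono) (auto simp: algebra_simps)
      also have "\<dots> \<le> T1 * G * (2 * W)" unfolding W_def using ii T1pos G1 by (intro mult_left_mono) auto
      finally show ?thesis .
    qed
    have a3: "G * (T1 * W) \<ge> 1 * (T1 * W)"
      using G1 T1pos W0 by (intro mult_right_mono) auto
    have iv': "T1 * W \<ge> Tk * P" using iv unfolding W_def .
    have a4: "G * (P - 1) > 0" using G1 P3 by simp
    have a5: "Ts * (P - 1) \<ge> 0" using Tspos P3 by simp
    have Tk0: "Tk \<ge> 0" unfolding Tk_def using Q1 by (rule theta_nonneg)
    have e1: "G * T2 * P * (X - 1) = T2 * (G * W)" unfolding W_def by (simp add: ac_simps)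
    have e2: "(3 * T1) * (G * W) = 3 * (G * (T1 * W))" by (simp add: ac_simps)
    have e3: "(T1 * G) * (2 * W) = 2 * (G * (T1 * W))" by (simp add: ac_simps)
    have e4: "(Tk - Ts) * (P - 1) = Tk * P - Tk - Ts * (P - 1)" by (simp add: algebra_simps)
    show ?thesis unfolding e1 e4 using a1 a2 a3 a4 a5 iv' Tk0 unfolding e2 e3 by linarith
  qed
  have "Tk - Ts + D \<le> Tk - Ts + Ts * G * (X * P - 1) / (P - 1)" using Dle by simp
  also have "\<dots> < G * (1 + T2 * P * ((X - 1) / (P - 1)))"
  proof -
    have d0: "P - 1 \<noteq> 0" using P3 by simp
    have l: "(Tk - Ts + Ts * G * (X * P - 1) / (P - 1)) * (P - 1) = (Tk - Ts) * (P - 1) + Ts * G * (X * P - 1)"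
      using d0 by (simp add: field_simps)
    have r: "G * (1 + T2 * P * ((X - 1) / (P - 1))) * (P - 1) = G * (P - 1) + G * T2 * P * (X - 1)"
      using d0 by (simp add: field_simps)
    have "(Tk - Ts + Ts * G * (X * P - 1) / (P - 1)) * (P - 1) < G * (1 + T2 * P * ((X - 1) / (P - 1))) * (P - 1)"
      unfolding l r using key .
    then show ?thesis using P3 by (simp add: mult_less_cancel_right)
  qed
  finally show ?thesis unfolding G_def P_def X_def T2_def Ts_def Tk_def D_def by simp
qed

theorem mainTheorem16:
  fixes n k t q :: nat
  assumes qpp: "\<exists>p m. prime p \<and> m > 0 \<and> q = p ^ m"
    and q3: "q \<ge> 3"
    and h1: "n + t > 2 * k"
    and h2: "k > t + 1"
    and h3: "k < 2 * t + 2"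
  shows "gauss_binom (real q) (n - t - 2) (k - t - 2) *
           (1 + theta (real q) (t + 2) * real q ^ (k - t - 1) *
                ((real q ^ (n - k) - 1) / (real q ^ (k - t - 1) - 1)))
         > theta (real q) (k + 1) - theta (real q) (k - t)
           + gauss_binom (real q) (n - t) (k - t)
           - real q ^ ((k - t + 1) * (k - t)) * gauss_binom (real q) (n - k - 1) (k - t)"
proof -
  define a where "a = k - t - 2"
  have ka: "k = t + a + 2" using h2 unfolding a_def by simp
  define c where "c = n - k - a - 3"
  have nc: "n = k + c + a + 3" using h1 ka unfolding c_def by simp
  have ta: "a + 1 \<le> t" using h3 ka by simp
  have Q3: "real q \<ge> 3" using q3 by simp
  have e1: "n - t - 2 = c + 2*a + 3" "k - t - 2 = a" "k - t - 1 = a + 1" "n - k = c + a + 3"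
    "k + 1 = t + a + 3" "k - t = a + 2" "n - t = c + 2*a + 5" "n - k - 1 = c + a + 2"
    "(k - t + 1) * (k - t) = (a + 3) * (a + 2)"
    using ka nc by (simp_all add: algebra_simps)
  show ?thesis
    apply (simp only: e1(1))
    apply (simp only: e1(2))
    apply (simp only: e1(3))
    apply (simp only: e1(8))
    apply (simp only: e1(9))
    apply (simp only: e1(4))
    apply (simp only: e1(5))
    apply (simp only: e1(6))
    apply (simp only: e1(7))
    by (rule core[OF Q3 ta, of c])
qed

end
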